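(* Let $d\ge 1$, let $p_0$ be a probability measure on $\mathbb R^d$, let $N\ge1$, let $0=\tau_0<\tau_1<\cdots<\tau_N=1$ be a grid with $\Delta_i=\tau_{i+1}-\tau_i$, and let $D_2=\sum_{i=0}^{N-1}\Delta_i^2$. For $i=0,\ldots,N-1$ let $A_i:\mathbb R^d\to[0,\infty)$ be measurable with $\mathcal A_i:=\mathbb E_{x_0\sim p_0}[A_i(x_0)]<\infty$. Fix $\varepsilon_a>0$ and nonnegative smoothing weights $K_\sigma(i,\ell)$, $i,\ell\in\{0,\ldots,N-1\}$, with $\sum_{\ell}K_\sigma(i,\ell)=1$ for every $i$. Fix $0<\omega<1/N$ and let $\mathcal W_\omega=\{w\in\mathbb R^N: w_i\ge\omega\ \forall i,\ \sum_i w_i=1\}$. Let $M\ge1$ and let $x_0^{(1)},\ldots,x_0^{(M)}$ be calibration samples. Define $\widehat{\mathcal A}_i=\frac1M\sum_{m=1}^M A_i(x_0^{(m)})$, $\widehat g_i=\sqrt{\widehat{\mathcal A}_i+\varepsilon_a}$, $\widehat b_i=\sum_\ell K_\sigma(i,\ell)\widehat g_\ell$, $\widehat\phi_i=\widehat b_i^2$, and the calibrated schedule $\widehat w_i=\Delta_i\widehat b_i/\sum_\ell\Delta_\ell\widehat b_\ell$. Define the population analogues $g_i^\star=\sqrt{\mathcal A_i+\varepsilon_a}$, $b_i^\star=\sum_\ell K_\sigma(i,\ell)g_\ell^\star$, $\phi_i^\star=(b_i^\star)^2$. Define $$\mathcal J(w)=\sum_{i=0}^{N-1}\frac{\mathcal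 A_i\Delta_i^2}{w_i},\qquad \mathcal J_{\sigma,\varepsilon_a}(w)=\sum_{i=0}^{N-1}\frac{\phi_i^\star\Delta_i^2}{w_i},\qquad \beta_{\sigma,\varepsilon_a}=\max_{0\le i\le N-1}|\phi_i^\star-\mathcal A_i|,$$ and let $w^\star\in\arg\min_{w\in\mathcal W_\omega}\mathcal J(w)$. Let $T:\mathbb R^d\to\mathbb R^d$ be a measurable map (the exact learned flow map) and $\mu_1=T_\#p_0$. For each $w\in\mathcal W_\omega$ let $T_w:\mathbb R^d\to\mathbb R^d$ be a measurable map (the terminal output of the Euler sampler using schedule $w$) and $\mu_w=(T_w)_\#p_0$; for the random schedule $\widehat w$, $\mu_{\widehat w}$ denotes the law of $T_{\widehat w}(x_0)$ for a fresh $x_0\sim p_0$ independent of the calibration samples. Let $B>0$ (the Euler budget) and $C_{\rm Eul}>0$. Assume: (A1) $x_0^{(1)},\ldots,x_0^{(M)}$ are i.i.d. with law $p_0$. (A2) There exist constants $R,\nu>0$ such that for every $i$, $|A_i(x_0)-\mathcal A_i|\le R$ for $p_0$-a.e. $x_0$ and $\operatorname{Var}_{x_0\sim p_0}(A_i(x_0))\le\nu^2$. (A3) $\widehat w\in\mathcal W_\omega$; the unconstrained minimizer of $\mathcal J_{\sigma,\varepsilon_a}$ over $\{w:w_i>0,\sum_iw_i=1\}$ lies in $\mathcal W_\omega$; and there is $G_{\max}>0$ with $0\le\widehat b_i\le G_{\max}$ and $0\le b_i^\star\le G_{\max}$ for all $i$. (A4) For every $w\in\mathcal W_\omega$ and every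 $x_0$, $\|T_w(x_0)-T(x_0)\|\le\frac{C_{\rm Eul}}{B}\sum_{i=0}^{N-1}\frac{A_i(x_0)\Delta_i^2}{w_i}$. For $\delta\in(0,1)$ set $$\eta_M(\delta)=\sqrt{\frac{2\nu^2\log(2N/\delta)}{M}}+\frac{2R\log(2N/\delta)}{3M},\quad \alpha_M(\delta)=\frac{\eta_M(\delta)}{2\sqrt{\varepsilon_a}},\quad \zeta_M(\delta)=2G_{\max}\alpha_M(\delta).$$ Then for every $\delta\in(0,1)$, with probability at least $1-\delta$ over the calibration set, $$W_1(\mu_{\widehat w},\mu_1)\le\frac{C_{\rm Eul}}{B}\left[\mathcal J(w^\star)+\frac{2D_2}{\omega}\bigl(\zeta_M(\delta)+\beta_{\sigma,\varepsilon_a}\bigr)\right].$$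
   Context: $W_1$ denotes the 1-Wasserstein distance $W_1(\mu,\nu)=\inf_{\pi}\int\|x-y\|\,d\pi(x,y)$ over couplings $\pi$ of $\mu$ and $\nu$. Interpretation: a schedule $w$ assigns fraction $w_i$ of a total budget of $B$ Euler steps to the interval $[\tau_i,\tau_{i+1}]$; $A_i(x_0)$ is an interval-wise local-error coefficient (e.g. the average or supremum over $[\tau_i,\tau_{i+1}]$ of the trajectory acceleration norm $\|\ddot x(t;x_0)\|$ for the ODE $\dot x=u_\theta(x,t)$, $x(0)=x_0$). *)

theory Defs
  imports "HOL-Probability.Probability"
begin

definition couplings :: "'a::euclidean_space measure \<Rightarrow> 'a measure \<Rightarrow> ('a \<times> 'a) measure set" where
  "couplings \<mu> \<nu> = {\<pi>. sets \<pi> = sets (borel \<Otimes>\<^sub>M borel) \<and> prob_space \<pi> \<and>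
      distr \<pi> borel fst = \<mu> \<and> distr \<pi> borel snd = \<nu>}"

definition wasserstein1 :: "'a::euclidean_space measure \<Rightarrow> 'a measure \<Rightarrow> ennreal" where
  "wasserstein1 \<mu> \<nu> = (INF \<pi>\<in>couplings \<mu> \<nu>. \<integral>\<^sup>+ z. ennreal (norm (fst z - snd z)) \<partial>\<pi>)"

definition schedules :: "nat \<Rightarrow> real \<Rightarrow> (nat \<Rightarrow> real) set" where
  "schedules N \<omega> = {w. (\<forall>i<N. w i \<ge> \<omega>) \<and> (\<Sum>i<N. w i) = 1}"

definition Jobj :: "nat \<Rightarrow> (nat \<Rightarrow> real) \<Rightarrow> (nat \<Rightarrow> real) \<Rightarrow> (nat \<Rightarrow> real) \<Rightarrow> real" where
  "Jobj N \<Delta> c w = (\<Sum>i<N. c i * (\<Delta> i)\<^sup>2 / w i)"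


definition gstep :: "(nat \<Rightarrow> real) \<Rightarrow> nat \<Rightarrow> real" where
  "gstep \<tau> i = \<tau> (Suc i) - \<tau> i"

definition emp_mean :: "nat \<Rightarrow> (nat \<Rightarrow> 'a \<Rightarrow> real) \<Rightarrow> (nat \<Rightarrow> 'b \<Rightarrow> 'a) \<Rightarrow> 'b \<Rightarrow> nat \<Rightarrow> real" where
  "emp_mean M A X \<xi> i = (\<Sum>m=1..M. A i (X m \<xi>)) / real M"

definition gfun :: "real \<Rightarrow> (nat \<Rightarrow> real) \<Rightarrow> nat \<Rightarrow> real" where
  "gfun \<epsilon> a i = sqrt (a i + \<epsilon>)"

definition smooth :: "nat \<Rightarrow> (nat \<Rightarrow> nat \<Rightarrow> real) \<Rightarrow> (nat \<Rightarrow> real) \<Rightarrow> nat \<Rightarrow> real" where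
  "smooth N K g i = (\<Sum>l<N. K i l * g l)"

definition sched :: "nat \<Rightarrow> (nat \<Rightarrow> real) \<Rightarrow> (nat \<Rightarrow> real) \<Rightarrow> nat \<Rightarrow> real" where
  "sched N \<Delta> b i = \<Delta> i * b i / (\<Sum>l<N. \<Delta> l * b l)"

definition etaM :: "real \<Rightarrow> real \<Rightarrow> nat \<Rightarrow> nat \<Rightarrow> real \<Rightarrow> real" where
  "etaM \<nu> R N M \<delta> = sqrt (2 * \<nu>\<^sup>2 * ln (2 * real N / \<delta>) / real M)
              + 2 * R * ln (2 * real N / \<delta>) / (3 * real M)"

end

theory Submission
  imports Defs
begin

lemma fact_ge_geom: "2 * 3 ^ n \<le> (fact (n + 2) :: real)"
proof (induction n)
  case 0 then show ?case by simp
next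
  case (Suc n)
  have "fact (Suc n + 2) = real (n + 3) * (fact (n + 2) :: real)"
    by (simp add: algebra_simps)
  also have "\<dots> \<ge> 3 * fact (n+2)" by (intro mult_right_mono) auto
  finally have "fact (Suc n + 2) \<ge> 3 * (fact (n + 2) :: real)" .
  moreover have "3 * (2 * 3 ^ n) \<le> 3 * (fact (n + 2) :: real)" using Suc by linarith
  moreover have "2 * 3 ^ Suc n = 3 * (2 * 3 ^ n :: real)" by simp
  ultimately show ?case by linarith
qed

lemma exp_bound_pos:
  fixes x :: real assumes "0 \<le> x" "x < 3"
  shows "exp x \<le> 1 + x + x\<^sup>2 / (2 * (1 - x / 3))"
proof -
  have s: "(\<lambda>n. x ^ n / fact n) sums exp x"
    using exp_converges[of x] by (simp add: divide_inverse mult.commute scaleR_conv_of_real)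
  have s2: "(\<lambda>n. x ^ (n+2) / fact (n+2)) sums (exp x - (\<Sum>i<2. x ^ i / fact i))"
    using sums_iff_shift[of "\<lambda>n. x ^ n / fact n" 2 "exp x - (\<Sum>i<2. x ^ i / fact i)"] s by simp
  have g: "(\<lambda>n. x\<^sup>2 / 2 * (x / 3) ^ n) sums (x\<^sup>2 / 2 * (1 / (1 - x / 3)))"
    by (intro sums_mult geometric_sums) (use assms in auto)
  have "exp x - (\<Sum>i<2. x ^ i / fact i) \<le> x\<^sup>2 / 2 * (1 / (1 - x / 3))"
  proof (rule sums_le[OF _ s2 g])
    fix n
    have "x ^ (n+2) / fact (n+2) \<le> x ^ (n+2) / (2 * 3 ^ n)"
      using fact_ge_geom[of n] assms by (intro divide_left_mono) auto
    also have "\<dots> = x\<^sup>2 / 2 * (x / 3) ^ n"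
      by (simp add: power_add power_divide field_simps power2_eq_square)
    finally show "x ^ (n+2) / fact (n+2) \<le> x\<^sup>2 / 2 * (x / 3) ^ n" .
  qed
  moreover have "(\<Sum>i<2. x ^ i / fact i) = 1 + x" by (simp add: eval_nat_numeral)
  ultimately show ?thesis by simp
qed

lemma exp_bound_neg:
  fixes x :: real assumes "x \<le> 0"
  shows "exp x \<le> 1 + x + x\<^sup>2 / 2"
proof -
  define g where "g = (\<lambda>y::real. 1 + y + y\<^sup>2 / 2 - exp y)"
  have "g 0 \<le> g x"
  proof (rule DERIV_nonpos_imp_nonincreasing[OF assms])
    fix y :: real assume y: "x \<le> y" "y \<le> 0"
    show "\<exists>d. (g has_real_derivative d) (at y) \<and> d \<le> 0"
    proof (rule exI[of _ "1 + y - exp y"], intro conjI)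
      show "(g has_real_derivative 1 + y - exp y) (at y)"
        unfolding g_def by (auto intro!: derivative_eq_intros)
      show "1 + y - exp y \<le> 0" using exp_ge_add_one_self[of y] by linarith
    qed
  qed
  then show ?thesis by (simp add: g_def)
qed

lemma exp_bound:
  fixes x u :: real assumes "x \<le> u" "0 \<le> u" "u < 3"
  shows "exp x \<le> 1 + x + x\<^sup>2 / (2 * (1 - u / 3))"
proof (cases "x \<le> 0")
  case True
  have "x\<^sup>2 / 2 \<le> x\<^sup>2 / (2 * (1 - u / 3))"
    using assms by (intro divide_left_mono) auto
  with exp_bound_neg[OF True] show ?thesis by linarith
next
  case False
  have "x\<^sup>2 / (2 * (1 - x / 3)) \<le> x\<^sup>2 / (2 * (1 - u / 3))"
    using assms False by (intro divide_left_mono) auto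
  with exp_bound_pos[of x] False assms show ?thesis by linarith
qed

lemma (in prob_space) bernstein_mgf:
  assumes [measurable]: "Y \<in> borel_measurable M"
    and AE: "AE x in M. \<bar>Y x\<bar> \<le> R" and E0: "expectation Y = 0"
    and V: "expectation (\<lambda>x. (Y x)\<^sup>2) \<le> v"
    and l: "0 < l" "l * R < 3" and R: "R > 0"
  shows "(\<integral>\<^sup>+x. ennreal (exp (l * Y x)) \<partial>M) \<le> ennreal (exp (l\<^sup>2 * v / (2 * (1 - l * R / 3))))"
proof -
  define c where "c = 1 / (2 * (1 - l * R / 3))"
  have c: "c > 0" using l unfolding c_def by (simp add: mult.commute)
  have intY: "integrable M Y"
    by (rule integrable_const_bound[where B = R]) (use AE in auto)
  have intY2: "integrable M (\<lambda>x. (Y x)\<^sup>2)"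
  proof (rule integrable_const_bound[where B = "R\<^sup>2"])
    show "AE x in M. norm ((Y x)\<^sup>2) \<le> R\<^sup>2"
      using AE by eventually_elim (use R in \<open>simp add: abs_le_square_iff power2_le_iff_abs_le\<close>)
  qed simp
  have "(\<integral>\<^sup>+x. ennreal (exp (l * Y x)) \<partial>M) \<le> (\<integral>\<^sup>+x. ennreal (1 + l * Y x + c * l\<^sup>2 * (Y x)\<^sup>2) \<partial>M)"
  proof (intro nn_integral_mono_AE, use AE in eventually_elim)
    case (elim x)
    have "l * Y x \<le> l * R" using elim l by (intro mult_left_mono) auto
    from exp_bound[OF this _ l(2)] l R
    have "exp (l * Y x) \<le> 1 + l * Y x + (l * Y x)\<^sup>2 / (2 * (1 - l * R / 3))" by simp
    also have "\<dots> = 1 + l * Y x + c * l\<^sup>2 * (Y x)\<^sup>2"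
      by (simp add: c_def power_mult_distrib)
    finally show ?case by (intro ennreal_leI)
  qed
  also have "\<dots> = ennreal (expectation (\<lambda>x. 1 + l * Y x + c * l\<^sup>2 * (Y x)\<^sup>2))"
  proof (rule nn_integral_eq_integral)
    show "integrable M (\<lambda>x. 1 + l * Y x + c * l\<^sup>2 * (Y x)\<^sup>2)"
      using intY intY2 by auto
    show "AE x in M. 0 \<le> 1 + l * Y x + c * l\<^sup>2 * (Y x)\<^sup>2"
    proof (use AE in eventually_elim)
      case (elim x)
      have "l * Y x \<le> l * R" using elim l by (intro mult_left_mono) auto
      from exp_bound[OF this _ l(2)] l R
      have "exp (l * Y x) \<le> 1 + l * Y x + (l * Y x)\<^sup>2 / (2 * (1 - l * R / 3))" by simp
      also have "\<dots> = 1 + l * Y x + c * l\<^sup>2 * (Y x)\<^sup>2"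
        by (simp add: c_def power_mult_distrib)
      finally show ?case using exp_gt_zero[of "l * Y x"] by linarith
    qed
  qed
  also have "expectation (\<lambda>x. 1 + l * Y x + c * l\<^sup>2 * (Y x)\<^sup>2) = 1 + l * expectation Y + c * l\<^sup>2 * expectation (\<lambda>x. (Y x)\<^sup>2)"
    using intY intY2 by (simp add: prob_space)
  also have "\<dots> = 1 + c * l\<^sup>2 * expectation (\<lambda>x. (Y x)\<^sup>2)" using E0 by simp
  also have "\<dots> \<le> 1 + c * l\<^sup>2 * v"
    using V c by (intro add_left_mono mult_left_mono) auto
  also have "\<dots> \<le> exp (c * l\<^sup>2 * v)" by (rule exp_ge_add_one_self)
  finally show ?thesis by (simp add: c_def mult_ac ennreal_leI)
qed

lemma (in prob_space) bernstein_ge: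
  fixes Y :: "'i \<Rightarrow> 'a \<Rightarrow> real"
  assumes fin: "finite I" and ne: "I \<noteq> {}" and indep: "indep_vars (\<lambda>_. borel) Y I"
    and AE: "\<And>i. i \<in> I \<Longrightarrow> AE x in M. \<bar>Y i x\<bar> \<le> R"
    and E0: "\<And>i. i \<in> I \<Longrightarrow> expectation (Y i) = 0"
    and V: "\<And>i. i \<in> I \<Longrightarrow> expectation (\<lambda>x. (Y i x)\<^sup>2) \<le> v"
    and R: "R > 0" and v: "v > 0" and t: "t > 0"
  shows "prob {x\<in>space M. (\<Sum>i\<in>I. Y i x) \<ge> t} \<le> exp (- t\<^sup>2 / (2 * (real (card I) * v + R * t / 3)))"
proof -
  define n where "n = real (card I)"
  have n: "n > 0" using fin ne by (simp add: n_def card_gt_0_iff)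
  define D where "D = n * v + R * t / 3"
  have D: "D > 0" using n v R t unfolding D_def by (simp add: add_pos_pos)
  define l where "l = t / D"
  have l: "l > 0" using t D by (simp add: l_def)
  have lR: "l * R < 3"
  proof -
    have "t * R < 3 * D" using n v unfolding D_def by (simp add: algebra_simps)
    then show ?thesis using D by (simp add: l_def field_simps)
  qed
  have rv [measurable]: "\<And>i. i \<in> I \<Longrightarrow> Y i \<in> borel_measurable M"
    using indep unfolding indep_vars_def by blast
  define q where "q = l\<^sup>2 * v / (2 * (1 - l * R / 3))"
  have "ennreal (prob {x\<in>space M. (\<Sum>i\<in>I. Y i x) \<ge> t}) = emeasure M {x\<in>space M. (\<Sum>i\<in>I. Y i x) \<ge> t}"
    by (simp add: emeasure_eq_measure)
  also have "\<dots> \<le> ennreal (exp (-l*t)) * (\<integral>\<^sup>+x\<in>space M. exp (l * (\<Sum>i\<in>I. Y i x)) \<partial>M)"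
    by (intro Chernoff_ineq_nn_integral_ge l) auto
  also have "(\<integral>\<^sup>+x\<in>space M. exp (l * (\<Sum>i\<in>I. Y i x)) \<partial>M) =
             (\<integral>\<^sup>+x. (\<Prod>i\<in>I. ennreal (exp (l * Y i x))) \<partial>M)"
    by (intro nn_integral_cong)
       (simp_all add: sum_distrib_left exp_sum fin prod_ennreal)
  also have "\<dots> = (\<Prod>i\<in>I. \<integral>\<^sup>+x. ennreal (exp (l * Y i x)) \<partial>M)"
    by (intro indep_vars_nn_integral fin indep_vars_compose2[OF indep]) auto
  also have "ennreal (exp (-l * t)) * \<dots> \<le> ennreal (exp (-l * t)) * (\<Prod>i\<in>I. ennreal (exp q))"
  proof (intro mult_left_mono prod_mono_ennreal)
    fix i assume i: "i \<in> I"
    show "(\<integral>\<^sup>+x. ennreal (exp (l * Y i x)) \<partial>M) \<le> ennreal (exp q)"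
      unfolding q_def by (rule bernstein_mgf[OF rv[OF i] AE[OF i] E0[OF i] V[OF i] l lR R])
  qed auto
  also have "\<dots> = ennreal (exp (-l * t) * (\<Prod>i\<in>I. exp q))"
    by (simp add: ennreal_mult ennreal_power)
  also have "exp (-l * t) * (\<Prod>i\<in>I. exp q) = exp (-l * t + n * q)"
  proof -
    have "exp (-l * t + n * q) = exp (-l * t) * exp (real (card I) * q)"
      unfolding n_def by (subst exp_add[symmetric]) simp
    also have "exp (real (card I) * q) = exp q ^ card I" by (rule exp_of_nat_mult)
    finally show ?thesis by simp
  qed
  also have "-l * t + n * q = - t\<^sup>2 / (2 * D)"
  proof -
    have "1 - l * R / 3 = n * v / D" using D unfolding l_def D_def by (simp add: field_simps)
    then have "q = l\<^sup>2 * v / (2 * (n * v / D))" unfolding q_def by simp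
    then have "n * q = l\<^sup>2 * D / 2" using n v D by (simp add: field_simps)
    then show ?thesis using D unfolding l_def by (simp add: field_simps power2_eq_square)
  qed
  finally show ?thesis
    by (subst (asm) ennreal_le_iff) (simp_all add: D_def n_def)
qed

lemma sched_opt:
  fixes N :: nat and \<Delta> bh Ac ws :: "nat \<Rightarrow> real" and \<omega> e :: real
  assumes \<Delta>: "\<And>i. i < N \<Longrightarrow> \<Delta> i > 0"
    and bh: "\<And>i. i < N \<Longrightarrow> bh i \<ge> 0"
    and wh: "sched N \<Delta> bh \<in> schedules N \<omega>"
    and ws: "ws \<in> schedules N \<omega>"
    and om: "\<omega> > 0"
    and close: "\<And>i. i < N \<Longrightarrow> \<bar>(bh i)\<^sup>2 - Ac i\<bar> \<le> e"
  shows "Jobj N \<Delta> Ac (sched N \<Delta> bh) \<le> Jobj N \<Delta> Ac ws + 2 * (\<Sum>i<N. (\<Delta> i)\<^sup>2) / \<omega> * e"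
proof -
  define S where "S = (\<Sum>l<N. \<Delta> l * bh l)"
  define wh where "wh = sched N \<Delta> bh"
  have whi: "\<And>i. wh i = \<Delta> i * bh i / S" unfolding wh_def sched_def S_def by simp
  have whom: "\<And>i. i < N \<Longrightarrow> wh i \<ge> \<omega>" and whsum: "(\<Sum>i<N. wh i) = 1"
    using wh unfolding wh_def schedules_def by auto
  have wsom: "\<And>i. i < N \<Longrightarrow> ws i \<ge> \<omega>" and wssum: "(\<Sum>i<N. ws i) = 1"
    using ws unfolding schedules_def by auto
  have S0: "S \<ge> 0" unfolding S_def using \<Delta> bh by (intro sum_nonneg) (simp add: less_imp_le)
  have "S \<noteq> 0"
  proof
    assume "S = 0"
    then have "(\<Sum>i<N. wh i) = 0" by (simp add: whi)
    with whsum show False by simp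
  qed
  with S0 have S: "S > 0" by simp
  have e0: "e \<ge> 0" if "N > 0" using close[of 0] that by (meson abs_ge_zero order_trans)
  have D2: "(\<Sum>i<N. (\<Delta> i)\<^sup>2 / wh i) \<le> (\<Sum>i<N. (\<Delta> i)\<^sup>2) / \<omega>"
    unfolding sum_divide_distrib
  proof (rule sum_mono)
    fix i assume "i \<in> {..<N}"
    then have a: "\<omega> \<le> wh i" using whom by auto
    then have "0 < wh i * \<omega>" using om by (simp add: mult_pos_pos)
    with a show "(\<Delta> i)\<^sup>2 / wh i \<le> (\<Delta> i)\<^sup>2 / \<omega>" by (intro divide_left_mono) auto
  qed
  have D2s: "(\<Sum>i<N. (\<Delta> i)\<^sup>2 / ws i) \<le> (\<Sum>i<N. (\<Delta> i)\<^sup>2) / \<omega>"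
    unfolding sum_divide_distrib
  proof (rule sum_mono)
    fix i assume "i \<in> {..<N}"
    then have a: "\<omega> \<le> ws i" using wsom by auto
    then have "0 < ws i * \<omega>" using om by (simp add: mult_pos_pos)
    with a show "(\<Delta> i)\<^sup>2 / ws i \<le> (\<Delta> i)\<^sup>2 / \<omega>" by (intro divide_left_mono) auto
  qed
  have "Jobj N \<Delta> Ac wh \<le> (\<Sum>i<N. ((bh i)\<^sup>2 + e) * (\<Delta> i)\<^sup>2 / wh i)"
    unfolding Jobj_def
  proof (rule sum_mono)
    fix i assume "i \<in> {..<N}"
    then have a: "\<omega> \<le> wh i" "Ac i \<le> (bh i)\<^sup>2 + e" using whom close[of i] by (auto simp: abs_le_iff)
    then show "Ac i * (\<Delta> i)\<^sup>2 / wh i \<le> ((bh i)\<^sup>2 + e) * (\<Delta> i)\<^sup>2 / wh i"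
      using om by (intro divide_right_mono mult_right_mono) auto
  qed
  also have "\<dots> = (\<Sum>i<N. (bh i)\<^sup>2 * (\<Delta> i)\<^sup>2 / wh i) + e * (\<Sum>i<N. (\<Delta> i)\<^sup>2 / wh i)"
    by (simp add: sum_distrib_left sum.distrib[symmetric] distrib_right add_divide_distrib)
  also have "(\<Sum>i<N. (bh i)\<^sup>2 * (\<Delta> i)\<^sup>2 / wh i) = (\<Sum>i<N. (\<Delta> i * bh i) * S)"
  proof (rule sum.cong[OF refl])
    fix i assume i: "i \<in> {..<N}"
    have "wh i > 0" using whom[of i] i om by auto
    then have "\<Delta> i * bh i \<noteq> 0" using S by (auto simp: whi)
    then show "(bh i)\<^sup>2 * (\<Delta> i)\<^sup>2 / wh i = (\<Delta> i * bh i) * S"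
      using S by (simp add: whi field_simps power2_eq_square)
  qed
  also have "\<dots> = S\<^sup>2" by (simp add: S_def sum_distrib_right[symmetric] power2_eq_square)
  also have "S\<^sup>2 \<le> (\<Sum>i<N. (bh i)\<^sup>2 * (\<Delta> i)\<^sup>2 / ws i)"
  proof -
    have "2 * S\<^sup>2 = (\<Sum>i<N. 2 * (\<Delta> i * bh i) * S)"
      by (simp add: S_def sum_distrib_right[symmetric] sum_distrib_left[symmetric] power2_eq_square)
    also have "\<dots> \<le> (\<Sum>i<N. (bh i)\<^sup>2 * (\<Delta> i)\<^sup>2 / ws i + S\<^sup>2 * ws i)"
    proof (rule sum_mono)
      fix i assume i: "i \<in> {..<N}"
      have w: "ws i > 0" using wsom[of i] i om by auto
      have "0 \<le> (\<Delta> i * bh i - S * ws i)\<^sup>2 / ws i" using w by simp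
      also have "\<dots> = (bh i)\<^sup>2 * (\<Delta> i)\<^sup>2 / ws i + S\<^sup>2 * ws i - 2 * (\<Delta> i * bh i) * S"
        using w by (simp add: field_simps power2_eq_square)
      finally show "2 * (\<Delta> i * bh i) * S \<le> (bh i)\<^sup>2 * (\<Delta> i)\<^sup>2 / ws i + S\<^sup>2 * ws i" by simp
    qed
    also have "\<dots> = (\<Sum>i<N. (bh i)\<^sup>2 * (\<Delta> i)\<^sup>2 / ws i) + S\<^sup>2"
      by (simp add: sum.distrib sum_distrib_left[symmetric] wssum)
    finally show ?thesis by simp
  qed
  also have "(\<Sum>i<N. (bh i)\<^sup>2 * (\<Delta> i)\<^sup>2 / ws i) \<le> (\<Sum>i<N. (Ac i + e) * (\<Delta> i)\<^sup>2 / ws i)"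
  proof (rule sum_mono)
    fix i assume "i \<in> {..<N}"
    then have a: "\<omega> \<le> ws i" "(bh i)\<^sup>2 \<le> Ac i + e" using wsom close[of i] by (auto simp: abs_le_iff)
    then show "(bh i)\<^sup>2 * (\<Delta> i)\<^sup>2 / ws i \<le> (Ac i + e) * (\<Delta> i)\<^sup>2 / ws i"
      using om by (intro divide_right_mono mult_right_mono) auto
  qed
  also have "\<dots> = Jobj N \<Delta> Ac ws + e * (\<Sum>i<N. (\<Delta> i)\<^sup>2 / ws i)"
    by (simp add: Jobj_def sum_distrib_left sum.distrib[symmetric] distrib_right add_divide_distrib)
  finally have "Jobj N \<Delta> Ac wh \<le> Jobj N \<Delta> Ac ws + e * (\<Sum>i<N. (\<Delta> i)\<^sup>2 / ws i) + e * (\<Sum>i<N. (\<Delta> i)\<^sup>2 / wh i)"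
    by linarith
  also have "\<dots> \<le> Jobj N \<Delta> Ac ws + e * ((\<Sum>i<N. (\<Delta> i)\<^sup>2) / \<omega>) + e * ((\<Sum>i<N. (\<Delta> i)\<^sup>2) / \<omega>)"
  proof (cases "N = 0")
    case True then show ?thesis by simp
  next
    case False
    then have "e \<ge> 0" using e0 by simp
    then show ?thesis using D2 D2s by (intro add_mono mult_left_mono) auto
  qed
  finally show ?thesis by (simp add: wh_def mult_ac)
qed

lemma sqrt_diff_bound:
  fixes a b e :: real assumes "a \<ge> 0" "b \<ge> 0" "e > 0"
  shows "\<bar>sqrt (a + e) - sqrt (b + e)\<bar> \<le> \<bar>a - b\<bar> / (2 * sqrt e)"
proof -
  have pa: "sqrt (a + e) \<ge> sqrt e" and pb: "sqrt (b + e) \<ge> sqrt e"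
    using assms by (auto intro: real_sqrt_le_mono)
  have se: "sqrt e > 0" using assms by simp
  have s: "sqrt (a + e) + sqrt (b + e) > 0" using pa pb se by linarith
  have "(sqrt (a + e) - sqrt (b + e)) * (sqrt (a + e) + sqrt (b + e)) = a - b"
    using assms by (simp add: algebra_simps)
  then have eq: "\<bar>sqrt (a + e) - sqrt (b + e)\<bar> = \<bar>a - b\<bar> / (sqrt (a + e) + sqrt (b + e))"
  proof -
    from \<open>(sqrt (a + e) - sqrt (b + e)) * (sqrt (a + e) + sqrt (b + e)) = a - b\<close> s
    have "sqrt (a + e) - sqrt (b + e) = (a - b) / (sqrt (a + e) + sqrt (b + e))"
      by (simp add: eq_divide_eq)
    then show ?thesis using s by (simp add: abs_divide)
  qed
  also have "\<dots> \<le> \<bar>a - b\<bar> / (2 * sqrt e)"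
  proof -
    have "2 * sqrt e \<le> sqrt (a + e) + sqrt (b + e)" using pa pb by linarith
    then show ?thesis using se s by (intro divide_left_mono) (auto intro: mult_pos_pos)
  qed
  finally show ?thesis .
qed

lemma perturb:
  fixes N :: nat and K :: "nat \<Rightarrow> nat \<Rightarrow> real" and Ah Ac :: "nat \<Rightarrow> real" and \<epsilon> \<eta> G :: real
  assumes Ah: "\<And>i. i < N \<Longrightarrow> Ah i \<ge> 0" and Ac: "\<And>i. i < N \<Longrightarrow> Ac i \<ge> 0"
    and cl: "\<And>i. i < N \<Longrightarrow> \<bar>Ah i - Ac i\<bar> \<le> \<eta>" and eps: "\<epsilon> > 0"
    and K_nonneg: "\<And>i l. i < N \<Longrightarrow> l < N \<Longrightarrow> K i l \<ge> 0"
    and K_sum: "\<And>i. i < N \<Longrightarrow> (\<Sum>l<N. K i l) = 1"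
    and bh: "0 \<le> smooth N K (gfun \<epsilon> Ah) i" "smooth N K (gfun \<epsilon> Ah) i \<le> G"
    and bs: "0 \<le> smooth N K (gfun \<epsilon> Ac) i" "smooth N K (gfun \<epsilon> Ac) i \<le> G"
    and i: "i < N"
  shows "\<bar>(smooth N K (gfun \<epsilon> Ah) i)\<^sup>2 - Ac i\<bar> \<le> 2 * G * (\<eta> / (2 * sqrt \<epsilon>))
           + Max ((\<lambda>i. \<bar>(smooth N K (gfun \<epsilon> Ac) i)\<^sup>2 - Ac i\<bar>) ` {..<N})"
proof -
  define a where "a = \<eta> / (2 * sqrt \<epsilon>)"
  define x where "x = smooth N K (gfun \<epsilon> Ah) i"
  define y where "y = smooth N K (gfun \<epsilon> Ac) i"
  have g: "\<bar>gfun \<epsilon> Ah l - gfun \<epsilon> Ac l\<bar> \<le> a" if l: "l < N" for l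
  proof -
    have "\<bar>gfun \<epsilon> Ah l - gfun \<epsilon> Ac l\<bar> \<le> \<bar>Ah l - Ac l\<bar> / (2 * sqrt \<epsilon>)"
      unfolding gfun_def by (rule sqrt_diff_bound) (use Ah Ac l eps in auto)
    also have "\<dots> \<le> a" unfolding a_def using cl[OF l] eps by (intro divide_right_mono) auto
    finally show ?thesis .
  qed
  have "\<bar>x - y\<bar> = \<bar>\<Sum>l<N. K i l * (gfun \<epsilon> Ah l - gfun \<epsilon> Ac l)\<bar>"
    by (simp add: x_def y_def smooth_def sum_subtractf right_diff_distrib)
  also have "\<dots> \<le> (\<Sum>l<N. \<bar>K i l * (gfun \<epsilon> Ah l - gfun \<epsilon> Ac l)\<bar>)" by (rule sum_abs)
  also have "\<dots> \<le> (\<Sum>l<N. K i l * a)"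
  proof (rule sum_mono)
    fix l assume "l \<in> {..<N}"
    then have "l < N" by simp
    then show "\<bar>K i l * (gfun \<epsilon> Ah l - gfun \<epsilon> Ac l)\<bar> \<le> K i l * a"
      using K_nonneg[OF i] g by (simp add: abs_mult mult_left_mono)
  qed
  also have "\<dots> = a" using K_sum[OF i] by (simp add: sum_distrib_right[symmetric])
  finally have xy: "\<bar>x - y\<bar> \<le> a" .
  have "\<bar>x\<^sup>2 - y\<^sup>2\<bar> = \<bar>x - y\<bar> * (x + y)"
  proof -
    have "x\<^sup>2 - y\<^sup>2 = (x - y) * (x + y)" by (simp add: power2_eq_square algebra_simps)
    moreover have "x + y \<ge> 0" using bh bs by (simp add: x_def y_def)
    ultimately show ?thesis by (simp add: abs_mult)
  qed
  also have "\<dots> \<le> a * (2 * G)"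
    using xy bh bs by (intro mult_mono) (auto simp: x_def y_def)
  finally have 1: "\<bar>x\<^sup>2 - y\<^sup>2\<bar> \<le> 2 * G * a" by (simp add: mult_ac)
  have 2: "\<bar>y\<^sup>2 - Ac i\<bar> \<le> Max ((\<lambda>i. \<bar>(smooth N K (gfun \<epsilon> Ac) i)\<^sup>2 - Ac i\<bar>) ` {..<N})"
    unfolding y_def using i by (intro Max_ge) auto
  have "\<bar>x\<^sup>2 - Ac i\<bar> \<le> \<bar>x\<^sup>2 - y\<^sup>2\<bar> + \<bar>y\<^sup>2 - Ac i\<bar>" by linarith
  with 1 2 show ?thesis by (simp add: x_def a_def)
qed

lemma w1_bound:
  fixes p0 :: "'a::euclidean_space measure" and f g :: "'a \<Rightarrow> 'a"
  assumes p0: "prob_space p0" "sets p0 = sets borel"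
    and f: "f \<in> borel_measurable borel" and g: "g \<in> borel_measurable borel"
    and c: "(\<integral>\<^sup>+x. ennreal (norm (f x - g x)) \<partial>p0) \<le> c"
  shows "wasserstein1 (distr p0 borel f) (distr p0 borel g) \<le> c"
proof -
  have fm [measurable]: "f \<in> measurable p0 borel" using f measurable_cong_sets[OF p0(2) refl] by blast
  have gm [measurable]: "g \<in> measurable p0 borel" using g measurable_cong_sets[OF p0(2) refl] by blast
  define \<pi> where "\<pi> = distr p0 (borel \<Otimes>\<^sub>M borel) (\<lambda>x. (f x, g x))"
  have pm: "(\<lambda>x. (f x, g x)) \<in> measurable p0 (borel \<Otimes>\<^sub>M borel)" by measurable
  have "\<pi> \<in> couplings (distr p0 borel f) (distr p0 borel g)"
    unfolding couplings_def
  proof (intro CollectI conjI)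
    show "sets \<pi> = sets (borel \<Otimes>\<^sub>M borel)" by (simp add: \<pi>_def)
    show "prob_space \<pi>" unfolding \<pi>_def by (rule prob_space.prob_space_distr[OF p0(1) pm])
    show "distr \<pi> borel fst = distr p0 borel f"
      unfolding \<pi>_def by (subst distr_distr[OF measurable_fst pm]) (simp add: comp_def)
    show "distr \<pi> borel snd = distr p0 borel g"
      unfolding \<pi>_def by (subst distr_distr[OF measurable_snd pm]) (simp add: comp_def)
  qed
  then have "wasserstein1 (distr p0 borel f) (distr p0 borel g) \<le> (\<integral>\<^sup>+ z. ennreal (norm (fst z - snd z)) \<partial>\<pi>)"
    unfolding wasserstein1_def by (rule INF_lower)
  also have "(\<integral>\<^sup>+ z. ennreal (norm (fst z - snd z)) \<partial>\<pi>) = (\<integral>\<^sup>+x. ennreal (norm (f x - g x)) \<partial>p0)"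
    unfolding \<pi>_def by (subst nn_integral_distr[OF pm]) auto
  finally show ?thesis using c by simp
qed

theorem theorem2:
  fixes p0 :: "'a::euclidean_space measure"
    and N M :: nat
    and \<tau> :: "nat \<Rightarrow> real"
    and A :: "nat \<Rightarrow> 'a \<Rightarrow> real"
    and K :: "nat \<Rightarrow> nat \<Rightarrow> real"
    and \<epsilon>a \<omega> R \<nu> Gmax B CEul \<delta> :: real
    and \<Omega> :: "'b measure"
    and X :: "nat \<Rightarrow> 'b \<Rightarrow> 'a"
    and T :: "'a \<Rightarrow> 'a"
    and Tw :: "(nat \<Rightarrow> real) \<Rightarrow> 'a \<Rightarrow> 'a"
    and wstar :: "nat \<Rightarrow> real"
  defines "\<Delta> \<equiv> gstep \<tau>"
    and "Acal \<equiv> (\<lambda>i. \<integral>x. A i x \<partial>p0)"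
    and "bhat \<equiv> (\<lambda>\<xi>. smooth N K (gfun \<epsilon>a (emp_mean M A X \<xi>)))"
    and "bstar \<equiv> smooth N K (gfun \<epsilon>a (\<lambda>i. \<integral>x. A i x \<partial>p0))"
  assumes p0: "prob_space p0" "sets p0 = sets borel"
    and N: "N \<ge> 1"
    and grid: "\<tau> 0 = 0" "\<tau> N = 1" "\<And>i. i < N \<Longrightarrow> \<tau> i < \<tau> (Suc i)"
    and A_meas: "\<And>i. i < N \<Longrightarrow> A i \<in> borel_measurable borel"
    and A_nonneg: "\<And>i x. i < N \<Longrightarrow> A i x \<ge> 0"
    and A_int: "\<And>i. i < N \<Longrightarrow> integrable p0 (A i)"
    and eps: "\<epsilon>a > 0"
    and K_nonneg: "\<And>i l. i < N \<Longrightarrow> l < N \<Longrightarrow> K i l \<ge> 0"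
    and K_sum: "\<And>i. i < N \<Longrightarrow> (\<Sum>l<N. K i l) = 1"
    and omega: "0 < \<omega>" "\<omega> < 1 / real N"
    and wstar: "wstar \<in> schedules N \<omega>"
      "\<And>w. w \<in> schedules N \<omega> \<Longrightarrow> Jobj N \<Delta> Acal wstar \<le> Jobj N \<Delta> Acal w"
    and T_meas: "T \<in> borel_measurable borel"
    and Tw_meas: "\<And>w. w \<in> schedules N \<omega> \<Longrightarrow> Tw w \<in> borel_measurable borel"
    and B: "B > 0" and CEul: "CEul > 0"
    and M: "M \<ge> 1"
    and A1: "prob_space \<Omega>"
      "\<And>m. m \<in> {1..M} \<Longrightarrow> X m \<in> measurable \<Omega> borel"
      "\<And>m. m \<in> {1..M} \<Longrightarrow> distr \<Omega> borel (X m) = p0"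
      "prob_space.indep_vars \<Omega> (\<lambda>_. borel) X {1..M}"
    and A2: "R > 0" "\<nu> > 0"
      "\<And>i. i < N \<Longrightarrow> (AE x in p0. \<bar>A i x - Acal i\<bar> \<le> R)"
      "\<And>i. i < N \<Longrightarrow> (\<integral>x. (A i x - Acal i)\<^sup>2 \<partial>p0) \<le> \<nu>\<^sup>2"
    and A3: "\<And>\<xi>. \<xi> \<in> space \<Omega> \<Longrightarrow> sched N \<Delta> (bhat \<xi>) \<in> schedules N \<omega>"
      "\<exists>w. (\<forall>i<N. w i > 0) \<and> (\<Sum>i<N. w i) = 1 \<and>
           (\<forall>v. (\<forall>i<N. v i > 0) \<and> (\<Sum>i<N. v i) = 1 \<longrightarrow> Jobj N \<Delta> (\<lambda>i. (bstar i)\<^sup>2) w \<le> Jobj N \<Delta> (\<lambda>i. (bstar i)\<^sup>2) v) \<and>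
           w \<in> schedules N \<omega>"
      "Gmax > 0"
      "\<And>\<xi> i. \<xi> \<in> space \<Omega> \<Longrightarrow> i < N \<Longrightarrow> 0 \<le> bhat \<xi> i \<and> bhat \<xi> i \<le> Gmax"
      "\<And>i. i < N \<Longrightarrow> 0 \<le> bstar i \<and> bstar i \<le> Gmax"
    and A4: "\<And>w x. w \<in> schedules N \<omega> \<Longrightarrow>
       norm (Tw w x - T x) \<le> CEul / B * (\<Sum>i<N. A i x * (\<Delta> i)\<^sup>2 / w i)"
    and delta: "0 < \<delta>" "\<delta> < 1"
  shows "\<exists>E \<in> prob_space.events \<Omega>. prob_space.prob \<Omega> E \<ge> 1 - \<delta> \<and>
    (\<forall>\<xi>\<in>E. wasserstein1 (distr p0 borel (Tw (sched N \<Delta> (bhat \<xi>)))) (distr p0 borel T)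
        \<le> ennreal (CEul / B * (Jobj N \<Delta> Acal wstar + 2 * (\<Sum>i<N. (\<Delta> i)\<^sup>2) / \<omega> *
          (2 * Gmax * (etaM \<nu> R N M \<delta> / (2 * sqrt \<epsilon>a))
           + Max ((\<lambda>i. \<bar>(bstar i)\<^sup>2 - Acal i\<bar>) ` {..<N})))))"
proof -
  note Ddef = assms(1) and Acaldef = assms(2) and bhatdef = assms(3) and bstardef = assms(4)
  interpret O: prob_space \<Omega> by (rule A1(1))
  interpret P: prob_space p0 by (rule p0(1))
  have Dpos: "\<And>i. i < N \<Longrightarrow> \<Delta> i > 0" using grid(3) by (simp add: Ddef gstep_def)
  define \<eta> where "\<eta> = etaM \<nu> R N M \<delta>"
  define L where "L = ln (2 * real N / \<delta>)"
  have Mpos: "real M > 0" using M by simp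
  have Npos: "real N > 0" using N by simp
  have L: "L > 0"
  proof -
    have "2 * real N / \<delta> > 1" using N delta by (simp add: field_simps)
    then show ?thesis unfolding L_def by simp
  qed
  define a where "a = sqrt (2 * \<nu>\<^sup>2 * L / real M)"
  define b where "b = 2 * R * L / (3 * real M)"
  have eta_ab: "\<eta> = a + b" by (simp add: \<eta>_def etaM_def a_def b_def L_def)
  have a: "a > 0" using A2 L Mpos by (simp add: a_def)
  have b: "b > 0" using A2 L Mpos by (simp add: b_def)
  have eta: "\<eta> > 0" using a b eta_ab by simp
  have Ma2: "real M * a\<^sup>2 = 2 * \<nu>\<^sup>2 * L" using A2 L Mpos by (simp add: a_def)
  have Mb: "real M * b = 2 * R * L / 3" using Mpos by (simp add: b_def)
  have key: "real M * \<eta>\<^sup>2 \<ge> 2 * \<nu>\<^sup>2 * L + 2 * R * L * \<eta> / 3"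
  proof -
    have "real M * \<eta>\<^sup>2 = real M * a\<^sup>2 + real M * b * \<eta> + real M * (a * b)"
      by (simp add: eta_ab power2_eq_square algebra_simps)
    moreover have "real M * (a * b) \<ge> 0" using a b Mpos by simp
    ultimately show ?thesis using Ma2 Mb by simp
  qed
  have expbound: "exp (- (real M * \<eta>)\<^sup>2 / (2 * (real M * \<nu>\<^sup>2 + R * (real M * \<eta>) / 3))) \<le> \<delta> / (2 * real N)"
  proof -
    have den: "2 * (real M * \<nu>\<^sup>2 + R * (real M * \<eta>) / 3) > 0" using Mpos A2 eta by (simp add: add_pos_pos)
    have "L * (2 * (real M * \<nu>\<^sup>2 + R * (real M * \<eta>) / 3)) = real M * (2 * \<nu>\<^sup>2 * L + 2 * R * L * \<eta> / 3)"
      by (simp add: algebra_simps)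
    also have "\<dots> \<le> real M * (real M * \<eta>\<^sup>2)" using key Mpos by (intro mult_left_mono) auto
    also have "\<dots> = (real M * \<eta>)\<^sup>2" by (simp add: power2_eq_square)
    finally have "L \<le> (real M * \<eta>)\<^sup>2 / (2 * (real M * \<nu>\<^sup>2 + R * (real M * \<eta>) / 3))"
      using den by (simp add: pos_le_divide_eq)
    then have "- (real M * \<eta>)\<^sup>2 / (2 * (real M * \<nu>\<^sup>2 + R * (real M * \<eta>) / 3)) \<le> - L" by simp
    then have "exp (- (real M * \<eta>)\<^sup>2 / (2 * (real M * \<nu>\<^sup>2 + R * (real M * \<eta>) / 3))) \<le> exp (- L)" by simp
    also have "exp (- L) = \<delta> / (2 * real N)"
      using Npos delta by (simp add: L_def exp_minus)
    finally show ?thesis .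
  qed
  have Xm [measurable]: "\<And>m. m \<in> {1..M} \<Longrightarrow> X m \<in> measurable \<Omega> borel" by (rule A1(2))
  have Am [measurable]: "\<And>i. i < N \<Longrightarrow> A i \<in> borel_measurable borel" by (rule A_meas)
  have tail: "O.prob {\<xi>\<in>space \<Omega>. real M * \<eta> \<le> (\<Sum>m\<in>{1..M}. s * (A i (X m \<xi>) - Acal i))} \<le> \<delta> / (2 * real N)"
    if s: "\<bar>s\<bar> = 1" and i: "i < N" for s i
  proof -
    have s2: "s\<^sup>2 = 1"
    proof -
      have "\<bar>s\<bar>\<^sup>2 = 1" using s by simp
      then show ?thesis by simp
    qed
    have hm: "(\<lambda>x. s * (A i x - Acal i)) \<in> borel_measurable borel" using Am[OF i] by measurable
    have indep: "O.indep_vars (\<lambda>_. borel) (\<lambda>m \<xi>. s * (A i (X m \<xi>) - Acal i)) {1..M}"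
      using O.indep_vars_compose2[OF A1(4), of "\<lambda>m x. s * (A i x - Acal i)" "\<lambda>_. borel"] hm by simp
    have intA: "integrable p0 (A i)" by (rule A_int[OF i])
    have AEm: "AE \<xi> in \<Omega>. \<bar>s * (A i (X m \<xi>) - Acal i)\<bar> \<le> R" if m: "m \<in> {1..M}" for m
    proof -
      have "AE x in distr \<Omega> borel (X m). \<bar>A i x - Acal i\<bar> \<le> R" by (subst A1(3)[OF m]) (rule A2(3)[OF i])
      from AE_distrD[OF Xm[OF m] this] show ?thesis by (simp add: abs_mult s)
    qed
    have E0m: "O.expectation (\<lambda>\<xi>. s * (A i (X m \<xi>) - Acal i)) = 0" if m: "m \<in> {1..M}" for m
    proof -
      have "O.expectation (\<lambda>\<xi>. s * (A i (X m \<xi>) - Acal i)) = integral\<^sup>L (distr \<Omega> borel (X m)) (\<lambda>x. s * (A i x - Acal i))"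
        by (rule integral_distr[OF Xm[OF m] hm, symmetric])
      also have "\<dots> = integral\<^sup>L p0 (\<lambda>x. s * (A i x - Acal i))" by (subst A1(3)[OF m]) (rule refl)
      also have "\<dots> = s * (integral\<^sup>L p0 (A i) - Acal i)"
        using intA by (simp add: P.prob_space)
      also have "\<dots> = 0" by (simp add: Acaldef)
      finally show ?thesis .
    qed
    have Vm: "O.expectation (\<lambda>\<xi>. (s * (A i (X m \<xi>) - Acal i))\<^sup>2) \<le> \<nu>\<^sup>2" if m: "m \<in> {1..M}" for m
    proof -
      have hm2: "(\<lambda>x. (s * (A i x - Acal i))\<^sup>2) \<in> borel_measurable borel" using Am[OF i] by measurable
      have "O.expectation (\<lambda>\<xi>. (s * (A i (X m \<xi>) - Acal i))\<^sup>2) = integral\<^sup>L (distr \<Omega> borel (X m)) (\<lambda>x. (s * (A i x - Acal i))\<^sup>2)"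
        by (rule integral_distr[OF Xm[OF m] hm2, symmetric])
      also have "\<dots> = integral\<^sup>L p0 (\<lambda>x. (A i x - Acal i)\<^sup>2)" by (subst A1(3)[OF m]) (simp add: power_mult_distrib s2)
      also have "\<dots> \<le> \<nu>\<^sup>2" by (rule A2(4)[OF i])
      finally show ?thesis .
    qed
    have "O.prob {\<xi>\<in>space \<Omega>. real M * \<eta> \<le> (\<Sum>m\<in>{1..M}. s * (A i (X m \<xi>) - Acal i))}
        \<le> exp (- (real M * \<eta>)\<^sup>2 / (2 * (real (card {1..M}) * \<nu>\<^sup>2 + R * (real M * \<eta>) / 3)))"
    proof (rule O.bernstein_ge[OF _ _ indep AEm E0m Vm A2(1)])
      show "finite {1..M}" by simp
      show "{1..M} \<noteq> {}" using M by simp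
      show "\<nu>\<^sup>2 > 0" using A2(2) by simp
      show "real M * \<eta> > 0" using Mpos eta by simp
    qed
    also have "\<dots> \<le> \<delta> / (2 * real N)" using expbound by simp
    finally show ?thesis .
  qed
  define U where "U = (\<lambda>s i. {\<xi>\<in>space \<Omega>. real M * \<eta> \<le> (\<Sum>m\<in>{1..M}. s * (A i (X m \<xi>) - Acal i))})"
  have Uev: "U s i \<in> O.events" if i: "i < N" for s i
  proof -
    have "(\<lambda>\<xi>. (\<Sum>m\<in>{1..M}. s * (A i (X m \<xi>) - Acal i))) \<in> borel_measurable \<Omega>"
      by (intro borel_measurable_sum) (use Am[OF i] in measurable)
    then show ?thesis unfolding U_def by measurable
  qed
  have emm: "(\<lambda>\<xi>. emp_mean M A X \<xi> i) \<in> borel_measurable \<Omega>" if i: "i < N" for i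
  proof -
    have "(\<lambda>\<xi>. (\<Sum>m\<in>{1..M}. A i (X m \<xi>))) \<in> borel_measurable \<Omega>"
      by (intro borel_measurable_sum) (use Am[OF i] in measurable)
    then show ?thesis unfolding emp_mean_def by measurable
  qed
  define E where "E = {\<xi>\<in>space \<Omega>. \<forall>i\<in>{..<N}. \<bar>emp_mean M A X \<xi> i - Acal i\<bar> \<le> \<eta>}"
  have Eev: "E \<in> O.events"
    unfolding E_def
  proof (rule sets.sets_Collect_finite_All)
    fix i assume "i \<in> {..<N}"
    then have [measurable]: "(\<lambda>\<xi>. emp_mean M A X \<xi> i) \<in> borel_measurable \<Omega>" using emm by simp
    show "{\<xi>\<in>space \<Omega>. \<bar>emp_mean M A X \<xi> i - Acal i\<bar> \<le> \<eta>} \<in> O.events" by measurable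
  qed simp
  have sumid: "(\<Sum>m\<in>{1..M}. s * (A i (X m \<xi>) - Acal i)) = s * real M * (emp_mean M A X \<xi> i - Acal i)" for s i \<xi>
    using Mpos by (simp add: emp_mean_def sum_distrib_left[symmetric] sum_subtractf field_simps)
  have sub: "space \<Omega> - E \<subseteq> (\<Union>i\<in>{..<N}. U 1 i \<union> U (-1) i)"
  proof
    fix \<xi> assume x: "\<xi> \<in> space \<Omega> - E"
    then obtain i where i: "i < N" and gt: "\<bar>emp_mean M A X \<xi> i - Acal i\<bar> > \<eta>"
      unfolding E_def by auto
    show "\<xi> \<in> (\<Union>i\<in>{..<N}. U 1 i \<union> U (-1) i)"
    proof (cases "emp_mean M A X \<xi> i - Acal i > \<eta>")
      case True
      then have "real M * \<eta> \<le> real M * (emp_mean M A X \<xi> i - Acal i)" using Mpos by simp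
      then have "\<xi> \<in> U 1 i" using x sumid[of 1 i \<xi>] unfolding U_def by simp
      then show ?thesis using i by auto
    next
      case False
      then have "- (emp_mean M A X \<xi> i - Acal i) > \<eta>" using gt by linarith
      then have "real M * \<eta> \<le> real M * (- (emp_mean M A X \<xi> i - Acal i))" using Mpos by simp
      then have "\<xi> \<in> U (-1) i" using x sumid[of "-1" i \<xi>] unfolding U_def by (simp add: algebra_simps)
      then show ?thesis using i by auto
    qed
  qed
  have "O.prob (space \<Omega> - E) \<le> O.prob (\<Union>i\<in>{..<N}. U 1 i \<union> U (-1) i)"
    using sub Uev by (intro O.finite_measure_mono) auto
  also have "\<dots> \<le> (\<Sum>i\<in>{..<N}. O.prob (U 1 i \<union> U (-1) i))"
    using Uev by (intro O.finite_measure_subadditive_finite) auto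
  also have "\<dots> \<le> (\<Sum>i\<in>{..<N}. \<delta> / (2 * real N) + \<delta> / (2 * real N))"
  proof (rule sum_mono)
    fix i assume "i \<in> {..<N}"
    then have i: "i < N" by simp
    have "O.prob (U 1 i \<union> U (-1) i) \<le> O.prob (U 1 i) + O.prob (U (-1) i)"
      using Uev[OF i] by (intro measure_Un_le) auto
    also have "\<dots> \<le> \<delta> / (2 * real N) + \<delta> / (2 * real N)"
      using tail[of 1 i] tail[of "-1" i] i unfolding U_def by (intro add_mono) auto
    finally show "O.prob (U 1 i \<union> U (-1) i) \<le> \<delta> / (2 * real N) + \<delta> / (2 * real N)" .
  qed
  also have "\<dots> = \<delta>" using Npos by simp
  finally have "O.prob (space \<Omega> - E) \<le> \<delta>" .
  then have probE: "O.prob E \<ge> 1 - \<delta>" using O.prob_compl[OF Eev] by simp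
  define e where "e = 2 * Gmax * (etaM \<nu> R N M \<delta> / (2 * sqrt \<epsilon>a)) + Max ((\<lambda>i. \<bar>(bstar i)\<^sup>2 - Acal i\<bar>) ` {..<N})"
  have main: "wasserstein1 (distr p0 borel (Tw (sched N \<Delta> (bhat \<xi>)))) (distr p0 borel T)
        \<le> ennreal (CEul / B * (Jobj N \<Delta> Acal wstar + 2 * (\<Sum>i<N. (\<Delta> i)\<^sup>2) / \<omega> * e))"
    if x: "\<xi> \<in> E" for \<xi>
  proof -
    have xs: "\<xi> \<in> space \<Omega>" using x by (simp add: E_def)
    define wh where "wh = sched N \<Delta> (bhat \<xi>)"
    have wh: "wh \<in> schedules N \<omega>" unfolding wh_def by (rule A3(1)[OF xs])
    have whpos: "wh i > 0" if "i < N" for i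
    proof -
      have "\<omega> \<le> wh i" using wh that unfolding schedules_def by blast
      then show ?thesis using omega(1) by linarith
    qed
    have close: "\<bar>(bhat \<xi> i)\<^sup>2 - Acal i\<bar> \<le> e" if i: "i < N" for i
    proof -
      have Ac0: "\<And>i. i < N \<Longrightarrow> Acal i \<ge> 0" unfolding Acaldef
        by (intro integral_nonneg_AE) (simp add: A_nonneg)
      have Ah0: "\<And>i. i < N \<Longrightarrow> emp_mean M A X \<xi> i \<ge> 0" unfolding emp_mean_def
        by (intro divide_nonneg_nonneg sum_nonneg) (auto simp: A_nonneg)
      have cl: "\<And>i. i < N \<Longrightarrow> \<bar>emp_mean M A X \<xi> i - Acal i\<bar> \<le> \<eta>" using x by (simp add: E_def)
      have bs_eq: "bstar = smooth N K (gfun \<epsilon>a Acal)" by (simp add: bstardef Acaldef)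
      have bh_eq: "bhat \<xi> = smooth N K (gfun \<epsilon>a (emp_mean M A X \<xi>))" by (simp add: bhatdef)
      have h1: "0 \<le> smooth N K (gfun \<epsilon>a (emp_mean M A X \<xi>)) i" "smooth N K (gfun \<epsilon>a (emp_mean M A X \<xi>)) i \<le> Gmax"
        using A3(4)[OF xs i] by (simp_all add: bh_eq)
      have h2: "0 \<le> smooth N K (gfun \<epsilon>a Acal) i" "smooth N K (gfun \<epsilon>a Acal) i \<le> Gmax"
        using A3(5)[OF i] by (simp_all add: bs_eq)
      show ?thesis
        unfolding e_def \<eta>_def[symmetric] bs_eq bh_eq
        by (rule perturb[where Ah = "emp_mean M A X \<xi>" and Ac = Acal, OF Ah0 Ac0 cl eps K_nonneg K_sum h1 h2 i])
    qed
    have opt: "Jobj N \<Delta> Acal wh \<le> Jobj N \<Delta> Acal wstar + 2 * (\<Sum>i<N. (\<Delta> i)\<^sup>2) / \<omega> * e"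
      unfolding wh_def
      by (rule sched_opt[OF Dpos _ A3(1)[OF xs] wstar(1) omega(1) close]) (use A3(4)[OF xs] in auto)
    have intg: "integrable p0 (\<lambda>x. CEul / B * (\<Sum>i<N. A i x * (\<Delta> i)\<^sup>2 / wh i))"
      using A_int by (intro integrable_mult_right integrable_sum integrable_divide integrable_mult_left) auto
    have "(\<integral>\<^sup>+x. ennreal (norm (Tw wh x - T x)) \<partial>p0) \<le> (\<integral>\<^sup>+x. ennreal (CEul / B * (\<Sum>i<N. A i x * (\<Delta> i)\<^sup>2 / wh i)) \<partial>p0)"
      by (intro nn_integral_mono ennreal_leI A4 wh)
    also have "\<dots> = ennreal (\<integral>x. CEul / B * (\<Sum>i<N. A i x * (\<Delta> i)\<^sup>2 / wh i) \<partial>p0)"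
    proof (rule nn_integral_eq_integral[OF intg], rule AE_I2)
      fix x
      have "(\<Sum>i<N. A i x * (\<Delta> i)\<^sup>2 / wh i) \<ge> 0"
        using A_nonneg whpos by (intro sum_nonneg divide_nonneg_pos mult_nonneg_nonneg) auto
      then show "0 \<le> CEul / B * (\<Sum>i<N. A i x * (\<Delta> i)\<^sup>2 / wh i)" using CEul B by simp
    qed
    also have "(\<integral>x. CEul / B * (\<Sum>i<N. A i x * (\<Delta> i)\<^sup>2 / wh i) \<partial>p0) = CEul / B * Jobj N \<Delta> Acal wh"
      using A_int by (simp add: Jobj_def Acaldef integral_sum integrable_divide integrable_mult_left)
    also have "ennreal (CEul / B * Jobj N \<Delta> Acal wh) \<le> ennreal (CEul / B * (Jobj N \<Delta> Acal wstar + 2 * (\<Sum>i<N. (\<Delta> i)\<^sup>2) / \<omega> * e))"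
      using opt CEul B by (intro ennreal_leI mult_left_mono) auto
    finally have nn: "(\<integral>\<^sup>+x. ennreal (norm (Tw wh x - T x)) \<partial>p0) \<le> ennreal (CEul / B * (Jobj N \<Delta> Acal wstar + 2 * (\<Sum>i<N. (\<Delta> i)\<^sup>2) / \<omega> * e))" .
    show ?thesis
      using w1_bound[OF p0 Tw_meas[OF wh] T_meas nn] by (simp add: wh_def)
  qed
  show ?thesis
    by (rule bexI[of _ E], intro conjI probE ballI) (use main Eev in \<open>simp_all add: e_def\<close>)
qed

end
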